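(* For $a,b\ge1$ and $P=[a]\times[b]$, we have $\sum_{p\in P}\mathbb{1}_p\equiv \frac{ab}{2}$.
   Context: $[a]\times[b]=\{(i,j)\colon 1\le i\le a,\ 1\le j\le b\}$ with $(i,j)\le(i',j')$ iff $i\le i'$ and $j\le j'$. $\mathcal{J}(P)$ is the set of order ideals of $P$. For $x\in P$, $I\in\mathcal{J}(P)$: $\mathbb{1}_x(I)=1$ if $x\in I$, else $0$; $T_x^+(I)=1$ if $x$ is a minimal element of $P\setminus I$, else $0$; $T_x^-(I)=1$ if $x$ is a maximal element of $I$, else $0$; $T_x=T_x^+-T_x^-$. For $f,g\colon\mathcal{J}(P)\to\mathbb{R}$, $f\equiv g$ means $f-g=\sum_{x\in P}c_xT_x$ for some real constants $c_x$; a real number denotes the corresponding constant function. *)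

theory Defs
  imports Main "HOL-Library.Indicator_Function"
begin

definition grid :: "nat \<Rightarrow> nat \<Rightarrow> (nat \<times> nat) set" where
  "grid a b = {(i, j). 1 \<le> i \<and> i \<le> a \<and> 1 \<le> j \<and> j \<le> b}"

definition grid_le :: "nat \<times> nat \<Rightarrow> nat \<times> nat \<Rightarrow> bool" where
  "grid_le x y \<longleftrightarrow> fst x \<le> fst y \<and> snd x \<le> snd y"

definition order_ideals :: "'a set \<Rightarrow> ('a \<Rightarrow> 'a \<Rightarrow> bool) \<Rightarrow> 'a set set" where
  "order_ideals P le = {I. I \<subseteq> P \<and> (\<forall>x\<in>I. \<forall>y\<in>P. le y x \<longrightarrow> y \<in> I)}"

definition ind :: "'a \<Rightarrow> 'a set \<Rightarrow> real" where
  "ind x I = (if x \<in> I then 1 else 0)"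

definition toggle_plus :: "'a set \<Rightarrow> ('a \<Rightarrow> 'a \<Rightarrow> bool) \<Rightarrow> 'a \<Rightarrow> 'a set \<Rightarrow> real" where
  "toggle_plus P le x I =
     (if x \<in> P - I \<and> (\<forall>y\<in>P - I. le y x \<longrightarrow> y = x) then 1 else 0)"

definition toggle_minus :: "'a set \<Rightarrow> ('a \<Rightarrow> 'a \<Rightarrow> bool) \<Rightarrow> 'a \<Rightarrow> 'a set \<Rightarrow> real" where
  "toggle_minus P le x I =
     (if x \<in> I \<and> (\<forall>y\<in>I. le x y \<longrightarrow> y = x) then 1 else 0)"

definition toggle :: "'a set \<Rightarrow> ('a \<Rightarrow> 'a \<Rightarrow> bool) \<Rightarrow> 'a \<Rightarrow> 'a set \<Rightarrow> real" where
  "toggle P le x I = toggle_plus P le x I - toggle_minus P le x I"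

definition toggle_equiv ::
  "'a set \<Rightarrow> ('a \<Rightarrow> 'a \<Rightarrow> bool) \<Rightarrow> ('a set \<Rightarrow> real) \<Rightarrow> ('a set \<Rightarrow> real) \<Rightarrow> bool" where
  "toggle_equiv P le f g \<longleftrightarrow>
     (\<exists>c :: 'a \<Rightarrow> real. \<forall>I\<in>order_ideals P le.
        f I - g I = (\<Sum>x\<in>P. c x * toggle P le x I))"

end

theory Submission
  imports Defs
begin

lemma downset_card:
  fixes S :: "nat set"
  assumes fin: "finite S" and pos: "\<And>k. k \<in> S \<Longrightarrow> 1 \<le> k"
    and down: "\<And>k k'. k \<in> S \<Longrightarrow> 1 \<le> k' \<Longrightarrow> k' \<le> k \<Longrightarrow> k' \<in> S"
    and j: "1 \<le> j"
  shows "j \<in> S \<longleftrightarrow> j \<le> card S"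
proof
  assume "j \<in> S"
  then have "{1..j} \<subseteq> S" using down by auto
  then have "card {1..j} \<le> card S" using fin by (rule card_mono[rotated])
  then show "j \<le> card S" by simp
next
  assume h: "j \<le> card S"
  show "j \<in> S"
  proof (rule ccontr)
    assume nj: "j \<notin> S"
    have "S \<subseteq> {1..j-1}"
    proof
      fix k assume k: "k \<in> S"
      have "\<not> j \<le> k" using down[OF k j] nj by auto
      then show "k \<in> {1..j-1}" using pos[OF k] by auto
    qed
    then have "card S \<le> card {1..j-1}" by (rule card_mono[rotated]) simp
    then show False using h j by simp
  qed
qed

locale gridI =
  fixes a b :: nat and I :: "(nat \<times> nat) set"
  assumes ideal: "I \<in> order_ideals (grid a b) grid_le"
begin

lemma sub: "I \<subseteq> grid a b" using ideal by (simp add: order_ideals_def)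

lemma closed: "x \<in> I \<Longrightarrow> y \<in> grid a b \<Longrightarrow> grid_le y x \<Longrightarrow> y \<in> I"
  using ideal by (auto simp: order_ideals_def)

definition L :: "nat \<Rightarrow> nat" where
  "L i = (if i = 0 then b else card {j. (i, j) \<in> I})"

lemma finS: "finite {j. (i, j) \<in> I}"
proof -
  have "{j. (i, j) \<in> I} \<subseteq> {1..b}" using sub by (auto simp: grid_def)
  then show ?thesis by (rule finite_subset) simp
qed

lemma memL:
  assumes "1 \<le> i" "1 \<le> j"
  shows "(i, j) \<in> I \<longleftrightarrow> j \<le> L i"
proof -
  have "j \<in> {j. (i, j) \<in> I} \<longleftrightarrow> j \<le> card {j. (i, j) \<in> I}"
  proof (rule downset_card[OF finS _ _ assms(2)])
    fix k assume "k \<in> {j. (i, j) \<in> I}" then show "1 \<le> k" using sub by (auto simp: grid_def)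
  next
    fix k k' assume k: "k \<in> {j. (i, j) \<in> I}" and "1 \<le> k'" "k' \<le> k"
    then have "(i, k') \<in> grid a b" using sub by (auto simp: grid_def)
    then show "k' \<in> {j. (i, j) \<in> I}" using closed[of "(i,k)" "(i,k')"] k \<open>k' \<le> k\<close>
      by (auto simp: grid_le_def)
  qed
  then show ?thesis using assms by (simp add: L_def)
qed

lemma Lle: "L i \<le> b"
proof (cases "i = 0")
  case False
  have "{j. (i, j) \<in> I} \<subseteq> {1..b}" using sub by (auto simp: grid_def)
  then have "card {j. (i, j) \<in> I} \<le> card {1..b}" by (rule card_mono[rotated]) simp
  then show ?thesis using False by (simp add: L_def)
qed (simp add: L_def)

lemma Lsuc: "L (Suc i) \<le> L i"
proof (cases "i = 0")
  case True then show ?thesis using Lle[of "Suc 0"] by (simp add: L_def)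
next
  case False
  have "{j. (Suc i, j) \<in> I} \<subseteq> {j. (i, j) \<in> I}"
  proof
    fix j assume "j \<in> {j. (Suc i, j) \<in> I}"
    then have h: "(Suc i, j) \<in> I" by simp
    then have "(i, j) \<in> grid a b" using sub False by (auto simp: grid_def)
    then show "j \<in> {j. (i, j) \<in> I}" using closed[OF h] by (auto simp: grid_le_def)
  qed
  then have "card {j. (Suc i, j) \<in> I} \<le> card {j. (i, j) \<in> I}" by (rule card_mono[OF finS])
  then show ?thesis using False by (simp add: L_def)
qed

lemma Lanti: "i \<le> i' \<Longrightarrow> L i' \<le> L i"
proof (induction i' rule: dec_induct)
  case (step n) then show ?case using Lsuc[of n] by simp
qed simp

lemma Lbeyond: "L (Suc a) = 0"
proof -
  have "{j. (Suc a, j) \<in> I} = {}" using sub by (auto simp: grid_def)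
  then show ?thesis by (simp add: L_def)
qed

lemma Tplus:
  assumes x: "(i, j) \<in> grid a b"
  shows "toggle_plus (grid a b) grid_le (i, j) I = (if j = L i + 1 \<and> L i < L (i - 1) then 1 else 0)"
proof -
  have i1: "1 \<le> i" and j1: "1 \<le> j" and ia: "i \<le> a" and jb: "j \<le> b" using x by (auto simp: grid_def)
  have "((i, j) \<in> grid a b - I \<and> (\<forall>y\<in>grid a b - I. grid_le y (i, j) \<longrightarrow> y = (i, j)))
        \<longleftrightarrow> (j = L i + 1 \<and> L i < L (i - 1))"
  proof
    assume h: "(i, j) \<in> grid a b - I \<and> (\<forall>y\<in>grid a b - I. grid_le y (i, j) \<longrightarrow> y = (i, j))"
    then have nI: "L i < j" using memL[OF i1 j1] by auto
    have e: "j = L i + 1"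
    proof (rule ccontr)
      assume "j \<noteq> L i + 1"
      then have "(i, j - 1) \<in> grid a b - I" using memL[OF i1, of "j-1"] nI i1 ia jb
        by (auto simp: grid_def)
      then have "(i, j - 1) = (i, j)" using h by (auto simp: grid_le_def)
      then show False using j1 by simp
    qed
    have "L i < L (i - 1)"
    proof (cases "i = 1")
      case True then show ?thesis using jb e by (simp add: L_def)
    next
      case False
      then have g: "(i - 1, j) \<in> grid a b" using i1 ia j1 jb by (auto simp: grid_def)
      have "(i - 1, j) \<in> I"
      proof (rule ccontr)
        assume "(i - 1, j) \<notin> I"
        then have "(i - 1, j) = (i, j)" using h g by (auto simp: grid_le_def)
        then show False using i1 by simp
      qed
      then have "j \<le> L (i - 1)" using memL[of "i-1" j] False i1 j1 by simp
      then show ?thesis using e by simp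
    qed
    then show "j = L i + 1 \<and> L i < L (i - 1)" using e by simp
  next
    assume h: "j = L i + 1 \<and> L i < L (i - 1)"
    have nI: "(i, j) \<notin> I" using memL[OF i1 j1] h by simp
    have "\<forall>y\<in>grid a b - I. grid_le y (i, j) \<longrightarrow> y = (i, j)"
    proof (intro ballI impI)
      fix y assume y: "y \<in> grid a b - I" and le: "grid_le y (i, j)"
      obtain i' j' where yy: "y = (i', j')" by (cases y)
      have i'1: "1 \<le> i'" and j'1: "1 \<le> j'" using y yy by (auto simp: grid_def)
      have ii: "i' \<le> i" and jj: "j' \<le> j" using le yy by (auto simp: grid_le_def)
      have "L i' < j'" using memL[OF i'1 j'1] y yy by auto
      moreover have "L i \<le> L i'" using Lanti[OF ii] .
      ultimately have "j' = j" using h jj by simp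
      moreover have "i' = i"
      proof (rule ccontr)
        assume "i' \<noteq> i"
        then have "i' \<le> i - 1" using ii by simp
        then have "L (i - 1) \<le> L i'" by (rule Lanti)
        then show False using h \<open>L i' < j'\<close> \<open>j' = j\<close> by simp
      qed
      ultimately show "y = (i, j)" using yy by simp
    qed
    then show "(i, j) \<in> grid a b - I \<and> (\<forall>y\<in>grid a b - I. grid_le y (i, j) \<longrightarrow> y = (i, j))"
      using nI x by simp
  qed
  then show ?thesis unfolding toggle_plus_def by presburger
qed

lemma Tminus:
  assumes x: "(i, j) \<in> grid a b"
  shows "toggle_minus (grid a b) grid_le (i, j) I = (if j = L i \<and> L (i + 1) < L i then 1 else 0)"
proof -
  have i1: "1 \<le> i" and j1: "1 \<le> j" and ia: "i \<le> a" and jb: "j \<le> b" using x by (auto simp: grid_def)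
  have "((i, j) \<in> I \<and> (\<forall>y\<in>I. grid_le (i, j) y \<longrightarrow> y = (i, j)))
        \<longleftrightarrow> (j = L i \<and> L (i + 1) < L i)"
  proof
    assume h: "(i, j) \<in> I \<and> (\<forall>y\<in>I. grid_le (i, j) y \<longrightarrow> y = (i, j))"
    then have jL: "j \<le> L i" using memL[OF i1 j1] by auto
    have e: "j = L i"
    proof (rule ccontr)
      assume "j \<noteq> L i"
      then have "(i, j + 1) \<in> I" using memL[OF i1, of "j+1"] jL by auto
      then show False using h by (auto simp: grid_le_def)
    qed
    have "L (i + 1) < L i"
    proof (rule ccontr)
      assume "\<not> L (i + 1) < L i"
      then have "(i + 1, j) \<in> I" using memL[of "i+1" j] j1 e by simp
      then show False using h by (auto simp: grid_le_def)
    qed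
    then show "j = L i \<and> L (i + 1) < L i" using e by simp
  next
    assume h: "j = L i \<and> L (i + 1) < L i"
    have inI: "(i, j) \<in> I" using memL[OF i1 j1] h by simp
    have "\<forall>y\<in>I. grid_le (i, j) y \<longrightarrow> y = (i, j)"
    proof (intro ballI impI)
      fix y assume y: "y \<in> I" and le: "grid_le (i, j) y"
      obtain i' j' where yy: "y = (i', j')" by (cases y)
      have ii: "i \<le> i'" and jj: "j \<le> j'" using le yy by (auto simp: grid_le_def)
      have i'1: "1 \<le> i'" and j'1: "1 \<le> j'" using ii jj i1 j1 by auto
      have "j' \<le> L i'" using memL[OF i'1 j'1] y yy by auto
      moreover have "L i' \<le> L i" using Lanti[OF ii] .
      ultimately have "j' = j" using h jj by simp
      moreover have "i' = i"
      proof (rule ccontr)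
        assume "i' \<noteq> i"
        then have "i + 1 \<le> i'" using ii by simp
        then have "L i' \<le> L (i + 1)" by (rule Lanti)
        then show False using h \<open>j' \<le> L i'\<close> \<open>j' = j\<close> by simp
      qed
      ultimately show "y = (i, j)" using yy by simp
    qed
    then show "(i, j) \<in> I \<and> (\<forall>y\<in>I. grid_le (i, j) y \<longrightarrow> y = (i, j))"
      using inI by simp
  qed
  then show ?thesis unfolding toggle_minus_def by presburger
qed


definition C :: "real \<Rightarrow> real" where
  "C e = (real a + e) * (e - real b) / 2"

definition P :: "nat \<Rightarrow> real" where
  "P i = (if L i < L (i - 1) then C (real (L i + 1) - real i) else 0)"

definition M :: "nat \<Rightarrow> real" where
  "M i = (if L (i + 1) < L i then C (real (L i) - real i) else 0)"

lemma row_toggle: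
  assumes i1: "1 \<le> i" and ia: "i \<le> a"
  shows "(\<Sum>j\<in>{1..b}. C (real j - real i) * toggle (grid a b) grid_le (i, j) I) = P i - M i"
proof -
  have g: "\<And>j. j \<in> {1..b} \<Longrightarrow> (i, j) \<in> grid a b" using i1 ia by (auto simp: grid_def)
  have s1: "(\<Sum>j\<in>{1..b}. C (real j - real i) * toggle_plus (grid a b) grid_le (i, j) I) = P i"
  proof (cases "L i < L (i - 1)")
    case True
    have "(\<Sum>j\<in>{1..b}. C (real j - real i) * toggle_plus (grid a b) grid_le (i, j) I)
        = (\<Sum>j\<in>{1..b}. if j = L i + 1 then C (real (L i + 1) - real i) else 0)"
      using True by (intro sum.cong) (auto simp: Tplus[OF g])
    also have "\<dots> = C (real (L i + 1) - real i)"
      using True Lle[of "i - 1"] by (simp add: sum.delta')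
    finally show ?thesis using True by (simp add: P_def)
  next
    case False
    have "(\<Sum>j\<in>{1..b}. C (real j - real i) * toggle_plus (grid a b) grid_le (i, j) I) = 0"
      using False by (intro sum.neutral) (auto simp: Tplus[OF g])
    then show ?thesis using False by (simp add: P_def)
  qed
  have s2: "(\<Sum>j\<in>{1..b}. C (real j - real i) * toggle_minus (grid a b) grid_le (i, j) I) = M i"
  proof (cases "L (i + 1) < L i")
    case True
    have "(\<Sum>j\<in>{1..b}. C (real j - real i) * toggle_minus (grid a b) grid_le (i, j) I)
        = (\<Sum>j\<in>{1..b}. if j = L i then C (real (L i) - real i) else 0)"
      using True by (intro sum.cong) (auto simp: Tminus[OF g])
    also have "\<dots> = C (real (L i) - real i)"
      using True Lle[of i] by (simp add: sum.delta')
    finally show ?thesis using True by (simp add: M_def)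
  next
    case False
    have "(\<Sum>j\<in>{1..b}. C (real j - real i) * toggle_minus (grid a b) grid_le (i, j) I) = 0"
      using False by (intro sum.neutral) (auto simp: Tminus[OF g])
    then show ?thesis using False by (simp add: M_def)
  qed
  show ?thesis using s1 s2 by (simp add: toggle_def right_diff_distrib sum_subtractf)
qed

lemma telescope:
  "(\<Sum>i\<in>{1..n}. P i - M i) = (\<Sum>i\<in>{1..n}. real (L i)) - real n * (real n + 1) / 2
     + real n * (real a - real b + 1) / 2 + C (real (L n) - real n) - M n"
proof (induction n)
  case 0
  then show ?case by (simp add: C_def M_def L_def)
next
  case (Suc n)
  have key: "P (Suc n) = C (real (L (Suc n)) - real n) - C (real (L n) - real n) + M n"
  proof (cases "L (Suc n) < L n")
    case True then show ?thesis by (simp add: P_def M_def algebra_simps)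
  next
    case False
    then have "L (Suc n) = L n" using Lsuc[of n] by simp
    then show ?thesis using False by (simp add: P_def M_def)
  qed
  show ?case using Suc key by (simp add: C_def algebra_simps add_divide_distrib diff_divide_distrib)
qed

lemma total_toggle:
  "(\<Sum>x\<in>grid a b. C (real (snd x) - real (fst x)) * toggle (grid a b) grid_le x I)
     = (\<Sum>i\<in>{1..a}. real (L i)) - real a * real b / 2"
proof -
  have gr: "grid a b = {1..a} \<times> {1..b}" by (auto simp: grid_def)
  have "(\<Sum>x\<in>grid a b. C (real (snd x) - real (fst x)) * toggle (grid a b) grid_le x I)
      = (\<Sum>i\<in>{1..a}. \<Sum>j\<in>{1..b}. C (real j - real i) * toggle (grid a b) grid_le (i, j) I)"
    unfolding gr by (simp add: sum.cartesian_product case_prod_beta')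
  also have "\<dots> = (\<Sum>i\<in>{1..a}. P i - M i)"
  proof (rule sum.cong)
    fix i assume "i \<in> {1..a}"
    then show "(\<Sum>j\<in>{1..b}. C (real j - real i) * toggle (grid a b) grid_le (i, j) I) = P i - M i"
      using row_toggle[of i] by simp
  qed simp
  also have "\<dots> = (\<Sum>i\<in>{1..a}. real (L i)) - real a * (real a + 1) / 2
     + real a * (real a - real b + 1) / 2 + C (real (L a) - real a) - M a"
    by (rule telescope)
  also have "C (real (L a) - real a) = M a"
  proof (cases "L a = 0")
    case True then show ?thesis by (simp add: M_def C_def)
  next
    case False then show ?thesis using Lbeyond by (simp add: M_def)
  qed
  finally show ?thesis by (simp add: algebra_simps add_divide_distrib diff_divide_distrib)
qed

lemma total_ind:
  "(\<Sum>p\<in>grid a b. ind p I) = (\<Sum>i\<in>{1..a}. real (L i))"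
proof -
  have gr: "grid a b = {1..a} \<times> {1..b}" by (auto simp: grid_def)
  have "(\<Sum>p\<in>grid a b. ind p I) = (\<Sum>i\<in>{1..a}. \<Sum>j\<in>{1..b}. ind (i, j) I)"
    unfolding gr by (simp add: sum.cartesian_product)
  also have "\<dots> = (\<Sum>i\<in>{1..a}. real (L i))"
  proof (rule sum.cong)
    fix i assume i: "i \<in> {1..a}"
    have "(\<Sum>j\<in>{1..b}. ind (i, j) I) = (\<Sum>j\<in>{1..b}. if j \<le> L i then 1 else 0)"
      by (rule sum.cong) (use i memL in \<open>auto simp: ind_def\<close>)
    also have "\<dots> = (\<Sum>j\<in>{j\<in>{1..b}. j \<le> L i}. 1)"
      by (subst sum.inter_filter) simp_all
    also have "{j\<in>{1..b}. j \<le> L i} = {1..L i}" using Lle[of i] by auto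
    finally show "(\<Sum>j\<in>{1..b}. ind (i, j) I) = real (L i)" by simp
  qed simp
  finally show ?thesis .
qed

end

theorem corollary3p11:
  fixes a b :: nat
  assumes "a \<ge> 1" and "b \<ge> 1"
  shows "toggle_equiv (grid a b) grid_le
           (\<lambda>I. \<Sum>p\<in>grid a b. ind p I) (\<lambda>I. real a * real b / 2)"
  unfolding toggle_equiv_def
proof (intro exI ballI)
  fix I assume I: "I \<in> order_ideals (grid a b) grid_le"
  interpret gridI a b I using I by unfold_locales
  show "(\<Sum>p\<in>grid a b. ind p I) - real a * real b / 2 =
    (\<Sum>x\<in>grid a b. (\<lambda>x. (real a + (real (snd x) - real (fst x))) * ((real (snd x) - real (fst x)) - real b) / 2) x
        * toggle (grid a b) grid_le x I)"
    using total_ind total_toggle by (simp add: C_def)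
qed

end
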